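(* Let $N\ge 1$, let $f:Z[1,N]\times\mathbb{R}\to\mathbb{R}$ be continuous in its second variable for every $k\in Z[1,N]$, and let $p:Z[1,N+2]\to\mathbb{R}$, $q:Z[1,N+1]\to\mathbb{R}$. Assume $\dim E>1$, $p_{\max}>0$, and (1) $\min_{k\in Z[1,N]}\lim_{s\to+\infty}\frac{f(k,s)}{s}>\alpha_1$; (2) there exists $S>0$ such that $f(k,-s)\le -f(k,s)$ for all $s\ge S$ and $k\in Z[1,N]$; (3) $\max_{k\in Z[1,N]}\lim_{s\to0}\frac{f(k,s)}{s}<\alpha_2$ (all limits assumed to exist, those at $+\infty$ possibly equal to $+\infty$). Then the boundary value problem $$\Delta^2\big(p(k)\Delta^2 y(k-2)\big)+\Delta\big(q(k)\Delta y(k-1)\big)+f(k,y(k))=0\ \ (k\in Z[1,N]),\qquad y(-1)=y(0)=y(N+1)=y(N+2)=0$$ has at least two solutions.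
   Context: $Z[a,b]=[a,b]\cap\mathbb{Z}$; $\Delta x(k)=x(k+1)-x(k)$, $\Delta^2=\Delta\circ\Delta$; $\Delta^2(p(k)\Delta^2y(k-2))$ means $\Delta^2$ applied to $k\mapsto p(k)\Delta^2 y(k-2)$, similarly for $\Delta(q(k)\Delta y(k-1))$. A solution is a function $y:Z[-1,N+2]\to\mathbb{R}$ satisfying the equation and boundary conditions. $E=\{y:Z[-1,N+2]\to\mathbb{R}\mid y(-1)=y(0)=y(N+1)=y(N+2)=0\}$ (a real vector space of dimension $N$). $p_{\min},p_{\max}$ are the min and max of $p$ over $Z[1,N+2]$, $q_{\min},q_{\max}$ those of $q$ over $Z[1,N+1]$. With $\tilde y=(y(1),\dots,y(N))^T$, $V$ is the $(N+1)\times N$ matrix with $V\tilde y=(\Delta y(0),\dots,\Delta y(N))^T$ and $W$ the $(N+2)\times N$ matrix with $W\tilde y=(\Delta^2y(-1),\dots,\Delta^2y(N))^T$ for $y\in E$; $\lambda_1,\lambda_2$ are the smallest eigenvalues of $V^TV$, $W^TW$. $\eta'(p)=\lambda_2$ if $p_{\min}\ge0$, $16$ if $p_{\min}<0$; $\eta(q)=\lambda_1$ if $q_{\max}<0$, $4$ if $q_{\max}\ge0$; $\xi(q)=\lambda_1$ if $q_{\min}\ge0$, $4$ if $q_{\min}<0$. $\alpha_1=\eta(q)q_{\max}-\eta'(p)p_{\min}$ and $\alpha_2=\xi(q)q_{\min}-16p_{\max}$. *)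

theory Defs
  imports Complex_Main "HOL-Library.Extended_Real" "Jordan_Normal_Form.Char_Poly"
begin

definition fdiff :: "(int \<Rightarrow> real) \<Rightarrow> int \<Rightarrow> real" where
  "fdiff x k = x (k + 1) - x k"

definition fdiff2 :: "(int \<Rightarrow> real) \<Rightarrow> int \<Rightarrow> real" where
  "fdiff2 x = fdiff (fdiff x)"

text \<open>The j-th coordinate vector of E (j = 0..N-1), i.e. the function with value 1 at
  the point j+1 and 0 elsewhere.\<close>
definition unitfun :: "nat \<Rightarrow> int \<Rightarrow> real" where
  "unitfun j = (\<lambda>k. if k = int j + 1 then 1 else 0)"

text \<open>V: (N+1) x N matrix with V ytilde = (Delta y(0),...,Delta y(N)).\<close>
definition Vmat :: "nat \<Rightarrow> real mat" where
  "Vmat N = mat (N + 1) N (\<lambda>(i, j). fdiff (unitfun j) (int i))"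

text \<open>W: (N+2) x N matrix with W ytilde = (Delta^2 y(-1),...,Delta^2 y(N)).\<close>
definition Wmat :: "nat \<Rightarrow> real mat" where
  "Wmat N = mat (N + 2) N (\<lambda>(i, j). fdiff2 (unitfun j) (int i - 1))"

definition smallest_eigenvalue :: "real mat \<Rightarrow> real" where
  "smallest_eigenvalue A = Min {l. eigenvalue A l}"

definition lambda1 :: "nat \<Rightarrow> real" where
  "lambda1 N = smallest_eigenvalue (transpose_mat (Vmat N) * Vmat N)"

definition lambda2 :: "nat \<Rightarrow> real" where
  "lambda2 N = smallest_eigenvalue (transpose_mat (Wmat N) * Wmat N)"

definition pmin :: "nat \<Rightarrow> (int \<Rightarrow> real) \<Rightarrow> real" where
  "pmin N p = Min (p ` {1 .. int N + 2})"
definition pmax :: "nat \<Rightarrow> (int \<Rightarrow> real) \<Rightarrow> real" where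
  "pmax N p = Max (p ` {1 .. int N + 2})"
definition qmin :: "nat \<Rightarrow> (int \<Rightarrow> real) \<Rightarrow> real" where
  "qmin N q = Min (q ` {1 .. int N + 1})"
definition qmax :: "nat \<Rightarrow> (int \<Rightarrow> real) \<Rightarrow> real" where
  "qmax N q = Max (q ` {1 .. int N + 1})"

definition eta' :: "nat \<Rightarrow> (int \<Rightarrow> real) \<Rightarrow> real" where
  "eta' N p = (if pmin N p \<ge> 0 then lambda2 N else 16)"
definition eta :: "nat \<Rightarrow> (int \<Rightarrow> real) \<Rightarrow> real" where
  "eta N q = (if qmax N q < 0 then lambda1 N else 4)"
definition xi :: "nat \<Rightarrow> (int \<Rightarrow> real) \<Rightarrow> real" where
  "xi N q = (if qmin N q \<ge> 0 then lambda1 N else 4)"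

definition alpha1 :: "nat \<Rightarrow> (int \<Rightarrow> real) \<Rightarrow> (int \<Rightarrow> real) \<Rightarrow> real" where
  "alpha1 N p q = eta N q * qmax N q - eta' N p * pmin N p"
definition alpha2 :: "nat \<Rightarrow> (int \<Rightarrow> real) \<Rightarrow> (int \<Rightarrow> real) \<Rightarrow> real" where
  "alpha2 N p q = xi N q * qmin N q - 16 * pmax N p"

definition is_solution ::
  "nat \<Rightarrow> (int \<Rightarrow> real) \<Rightarrow> (int \<Rightarrow> real) \<Rightarrow> (int \<Rightarrow> real \<Rightarrow> real) \<Rightarrow> (int \<Rightarrow> real) \<Rightarrow> bool" where
  "is_solution N p q f y \<longleftrightarrow>
     (\<forall>k\<in>{1 .. int N}.
        fdiff2 (\<lambda>j. p j * fdiff2 y (j - 2)) k + fdiff (\<lambda>j. q j * fdiff y (j - 1)) k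
        + f k (y k) = 0)
     \<and> y (-1) = 0 \<and> y 0 = 0 \<and> y (int N + 1) = 0 \<and> y (int N + 2) = 0"

end

theory Submission imports Defs "HOL-Analysis.Analysis" begin

definition inE :: "nat \<Rightarrow> (int\<Rightarrow>real) \<Rightarrow> bool" where
  "inE N y \<longleftrightarrow> (\<forall>k. k \<notin> {1..int N} \<longrightarrow> y k = 0)"
definition nrm :: "nat \<Rightarrow> (int\<Rightarrow>real) \<Rightarrow> real" where
  "nrm N y = (\<Sum>k\<in>{1..int N}. (y k)^2)"

lemma cont_coord [continuous_intros]: "continuous_on S (\<lambda>y::'a\<Rightarrow>real. y k)"
  using continuous_on_product_coordinates[of k] by (rule continuous_on_subset) simp

lemma compact_box:
  assumes "R \<ge> 0"
  shows "compact {y::int\<Rightarrow>real. inE N y \<and> (\<forall>k. \<bar>y k\<bar> \<le> R)}"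
proof -
  have eq: "{y::int\<Rightarrow>real. inE N y \<and> (\<forall>k. \<bar>y k\<bar> \<le> R)}
     = PiE UNIV (\<lambda>k. if k \<in> {1..int N} then {-R..R} else {0})"
  proof (rule subset_antisym; rule subsetI)
    fix y assume "y \<in> {y::int\<Rightarrow>real. inE N y \<and> (\<forall>k. \<bar>y k\<bar> \<le> R)}"
    then have a: "inE N y" "\<And>k. \<bar>y k\<bar> \<le> R" by auto
    have "y k \<in> (if k \<in> {1..int N} then {-R..R} else {0})" for k
      using a[unfolded inE_def, rule_format, of k] a(2)[of k] by (auto simp: abs_le_iff)
    then show "y \<in> PiE UNIV (\<lambda>k. if k \<in> {1..int N} then {-R..R} else {0})"
      by (auto simp: PiE_iff)
  next
    fix y assume "y \<in> PiE UNIV (\<lambda>k. if k \<in> {1..int N} then {-R..R} else {0})"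
    then have a: "y k \<in> (if k \<in> {1..int N} then {-R..R} else {0})" for k
      by (auto simp: PiE_iff)
    have "inE N y" unfolding inE_def
    proof (intro allI impI)
      fix k :: int assume "k \<notin> {1..int N}" then show "y k = 0" using a[of k] by (auto split: if_splits)
    qed
    moreover have "\<bar>y k\<bar> \<le> R" for k
      using a[of k] assms by (cases "k \<in> {1..int N}") (auto simp: abs_le_iff)
    ultimately show "y \<in> {y::int\<Rightarrow>real. inE N y \<and> (\<forall>k. \<bar>y k\<bar> \<le> R)}" by auto
  qed
  have "compactin (product_topology (\<lambda>i. euclidean) UNIV)
      (PiE UNIV (\<lambda>k. if k \<in> {1..int N} then {-R..R} else {0::real}))"
    by (subst compactin_PiE) auto
  then show ?thesis unfolding eq
    by (simp add: euclidean_product_topology)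
qed

lemma closed_inE: "closed {y::int\<Rightarrow>real. inE N y}"
proof -
  have "{y::int\<Rightarrow>real. inE N y} = (\<Inter>k\<in>-{1..int N}. {y. y k = 0})"
    by (auto simp: inE_def)
  moreover have "closed {y::int\<Rightarrow>real. y k = 0}" for k
    by (intro closed_Collect_eq) (auto intro: continuous_intros)
  ultimately show ?thesis by auto
qed

lemma nrm_nonneg: "nrm N y \<ge> 0" unfolding nrm_def by (auto intro: sum_nonneg)

lemma nrm_zero: assumes "inE N y" "nrm N y = 0" shows "y = (\<lambda>_. 0)"
proof
  fix k
  show "y k = 0"
  proof (cases "k \<in> {1..int N}")
    case True
    then show ?thesis using assms(2) unfolding nrm_def
      by (subst (asm) sum_nonneg_eq_0_iff) auto
  qed (use assms(1) inE_def in auto)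
qed

lemma inE_lin: "inE N y \<Longrightarrow> inE N z \<Longrightarrow> inE N (\<lambda>k. a * y k + b * z k)"
  by (auto simp: inE_def)

lemma unitfun_inE: "j < N \<Longrightarrow> inE N (unitfun j)"
  by (auto simp: inE_def unitfun_def)

lemma nrm_lin: "nrm N (\<lambda>k. y k + t * z k) = nrm N y + 2 * t * (\<Sum>k\<in>{1..int N}. y k * z k) + t^2 * nrm N z"
  unfolding nrm_def by (simp add: power2_sum sum.distrib sum_distrib_left power_mult_distrib algebra_simps)

lemma nrm_scale: "nrm N (\<lambda>k. c * y k) = c^2 * nrm N y"
  unfolding nrm_def by (simp add: sum_distrib_left power_mult_distrib)

lemma sum_unitfun: "j < N \<Longrightarrow> (\<Sum>k\<in>{1..int N}. y k * unitfun j k) = y (int j + 1)"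
proof -
  assume j: "j < N"
  have "(\<Sum>k\<in>{1..int N}. y k * unitfun j k) = (\<Sum>k\<in>{1..int N}. if k = int j + 1 then y k else 0)"
    by (rule sum.cong) (auto simp: unitfun_def)
  also have "\<dots> = y (int j + 1)" using j by (simp add: sum.delta)
  finally show ?thesis .
qed

lemma nrm_unitfun: "j < N \<Longrightarrow> nrm N (unitfun j) = 1"
proof -
  assume j: "j < N"
  have "nrm N (unitfun j) = (\<Sum>k\<in>{1..int N}. if k = int j + 1 then 1 else 0)"
    unfolding nrm_def by (rule sum.cong) (auto simp: unitfun_def)
  also have "\<dots> = 1" using j by (simp add: sum.delta)
  finally show ?thesis .
qed

lemma quad_zero:
  fixes a b :: real
  assumes "\<forall>t. a * t + b * t^2 \<ge> 0"
  shows "a = 0"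
proof (rule ccontr)
  assume a: "a \<noteq> 0"
  define t where "t = - a / (2 * (\<bar>b\<bar> + 1))"
  have d: "\<bar>b\<bar> + 1 > 0" by simp
  define X where "X = \<bar>b\<bar> + 1"
  have X: "X > 0" unfolding X_def by simp
  define u where "u = a^2 / (4 * X)"
  have u: "u > 0" unfolding u_def using a X by simp
  have h1: "a * t = - (2 * u)" unfolding t_def u_def X_def[symmetric] using X by (simp add: power2_eq_square field_simps)
  have h2: "b * t^2 = b * a^2 / (4 * X^2)" unfolding t_def X_def[symmetric] using X by (simp add: power2_eq_square field_simps)
  have h3: "b * a^2 / (4 * X^2) \<le> u"
  proof -
    have "b * a^2 \<le> X * a^2" unfolding X_def by (intro mult_right_mono) auto
    then have "b * a^2 / (4 * X^2) \<le> X * a^2 / (4 * X^2)"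
      by (intro divide_right_mono) auto
    also have "\<dots> = u" unfolding u_def using X by (simp add: power2_eq_square)
    finally show ?thesis .
  qed
  have "a * t + b * t^2 < 0" using u h1 h2 h3 by linarith
  then show False using assms by (meson not_le)
qed

lemma eig_bound:
  fixes L :: "(int \<Rightarrow> real) \<Rightarrow> nat \<Rightarrow> real" and A :: "real mat"
  assumes N: "N \<ge> 1"
    and lin: "\<And>y i. inE N y \<Longrightarrow> i < m \<Longrightarrow> L y i = (\<Sum>j<N. y (int j + 1) * L (unitfun j) i)"
    and A: "A = Matrix.mat m N (\<lambda>(i,j). L (unitfun j) i)"
    and y: "inE N y"
  shows "(\<Sum>i<m. (L y i)^2) \<ge> smallest_eigenvalue (transpose_mat A * A) * nrm N y"
proof -
  define Q where "Q y = (\<Sum>i<m. (L y i)^2)" for y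
  have linc: "L (\<lambda>k. y k + t * z k) i = L y i + t * L z i" if "inE N y" "inE N z" "i < m" for y z t i
  proof -
    have "inE N (\<lambda>k. y k + t * z k)" using inE_lin[OF that(1,2), of 1 t] by simp
    then have "L (\<lambda>k. y k + t * z k) i = (\<Sum>j<N. (y (int j + 1) + t * z (int j + 1)) * L (unitfun j) i)"
      using lin that by simp
    also have "\<dots> = L y i + t * L z i" using lin that
      by (simp add: distrib_right sum.distrib sum_distrib_left mult.assoc)
    finally show ?thesis .
  qed
  have lins: "L (\<lambda>k. c * y k) i = c * L y i" if "inE N y" "i < m" for y c i
  proof -
    have "inE N (\<lambda>k. c * y k)" using that by (auto simp: inE_def)
    then show ?thesis using lin that by (simp add: sum_distrib_left mult.assoc)
  qed
  define S1 where "S1 = {y::int\<Rightarrow>real. inE N y \<and> (\<forall>k. \<bar>y k\<bar> \<le> 1)} \<inter> ({y. inE N y} \<inter> {y. nrm N y = 1})"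
  have S1_eq: "S1 = {y. inE N y \<and> nrm N y = 1}"
  proof -
    have "\<bar>y k\<bar> \<le> 1" if "inE N y" "nrm N y = 1" for y k
    proof (cases "k \<in> {1..int N}")
      case True
      have "(y k)^2 \<le> nrm N y" unfolding nrm_def
        by (rule member_le_sum[OF True]) auto
      then have "(y k)^2 \<le> 1" using that by simp
      then show ?thesis by (simp add: abs_square_le_1)
    qed (use that in \<open>auto simp: inE_def\<close>)
    then show ?thesis unfolding S1_def by auto
  qed
  have "compact S1" unfolding S1_def
  proof (intro compact_Int_closed closed_Int compact_box closed_inE)
    show "closed {y::int\<Rightarrow>real. nrm N y = 1}" unfolding nrm_def
      by (intro closed_Collect_eq) (auto intro!: continuous_intros)
  qed simp
  moreover have "unitfun 0 \<in> S1" using N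
    by (auto simp: S1_eq unitfun_inE nrm_unitfun)
  then have "S1 \<noteq> {}" by auto
  moreover have "continuous_on S1 Q"
  proof -
    have "continuous_on S1 (\<lambda>y. \<Sum>i<m. (\<Sum>j<N. y (int j + 1) * L (unitfun j) i)^2)"
      by (intro continuous_intros)
    moreover have "\<And>y. y \<in> S1 \<Longrightarrow> Q y = (\<Sum>i<m. (\<Sum>j<N. y (int j + 1) * L (unitfun j) i)^2)"
      unfolding Q_def S1_eq using lin by auto
    moreover have "continuous_on S1 Q = continuous_on S1 (\<lambda>y. \<Sum>i<m. (\<Sum>j<N. y (int j + 1) * L (unitfun j) i)^2)"
      by (rule continuous_on_cong) (auto simp: calculation(2))
    ultimately show ?thesis by simp
  qed
  ultimately have "\<exists>x\<in>S1. \<forall>y\<in>S1. Q x \<le> Q y" by (rule continuous_attains_inf)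
  then obtain y0 where y0: "y0 \<in> S1" "\<And>y. y \<in> S1 \<Longrightarrow> Q y0 \<le> Q y" by blast
  define mu where "mu = Q y0"
  have y0E: "inE N y0" and y01: "nrm N y0 = 1" using y0(1) by (auto simp: S1_eq)
  have Qge: "Q z \<ge> mu * nrm N z" if z: "inE N z" for z
  proof (cases "nrm N z = 0")
    case True
    then have "z = (\<lambda>_. 0)" using nrm_zero z by blast
    then show ?thesis using True by (simp add: Q_def sum_nonneg)
  next
    case False
    then have pos: "nrm N z > 0" using nrm_nonneg[of N z] by linarith
    define c where "c = 1 / sqrt (nrm N z)"
    have c2: "c^2 = 1 / nrm N z" unfolding c_def using pos by (simp add: power_divide)
    have "(\<lambda>k. c * z k) \<in> S1" unfolding S1_eq using z c2 pos
      by (auto simp: inE_def nrm_scale)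
    then have "mu \<le> Q (\<lambda>k. c * z k)" using y0 mu_def by blast
    also have "Q (\<lambda>k. c * z k) = c^2 * Q z" unfolding Q_def
      using lins[OF z] by (simp add: power_mult_distrib sum_distrib_left)
    finally have "mu \<le> Q z / nrm N z" using c2 by simp
    then show ?thesis using pos by (simp add: field_simps)
  qed
  have key: "(\<Sum>i<m. L y0 i * L z i) = mu * (\<Sum>k\<in>{1..int N}. y0 k * z k)" if z: "inE N z" for z
  proof -
    let ?B = "(\<Sum>i<m. L y0 i * L z i)" and ?P = "(\<Sum>k\<in>{1..int N}. y0 k * z k)"
    have "\<forall>t. (2 * ?B - 2 * mu * ?P) * t + (Q z - mu * nrm N z) * t^2 \<ge> 0"
    proof
      fix t
      have zt: "inE N (\<lambda>k. y0 k + t * z k)" using inE_lin[OF y0E z, of 1 t] by simp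
      have "Q (\<lambda>k. y0 k + t * z k) = mu + 2 * t * ?B + t^2 * Q z"
        unfolding Q_def mu_def using linc[OF y0E z]
        by (simp add: power2_sum sum.distrib sum_distrib_left power_mult_distrib algebra_simps)
      moreover have "Q (\<lambda>k. y0 k + t * z k) \<ge> mu * nrm N (\<lambda>k. y0 k + t * z k)" using Qge[OF zt] .
      ultimately show "(2 * ?B - 2 * mu * ?P) * t + (Q z - mu * nrm N z) * t^2 \<ge> 0"
        unfolding nrm_lin y01 by (simp add: algebra_simps)
    qed
    from quad_zero[OF this] show ?thesis by simp
  qed
  define M where "M = transpose_mat A * A"
  have Ac: "A \<in> carrier_mat m N" using A by simp
  have Mc: "M \<in> carrier_mat N N" unfolding M_def using Ac by simp
  define v0 where "v0 = Matrix.vec N (\<lambda>j. y0 (int j + 1))"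
  have v0c: "v0 \<in> carrier_vec N" unfolding v0_def by simp
  have Av0: "(A *\<^sub>v v0) $ i = L y0 i" if "i < m" for i
  proof -
    have "(A *\<^sub>v v0) $ i = (\<Sum>j<N. L (unitfun j) i * y0 (int j + 1))"
      using that A by (simp add: v0_def scalar_prod_def row_def lessThan_atLeast0)
    also have "\<dots> = L y0 i" using lin[OF y0E that] by (simp add: mult.commute)
    finally show ?thesis .
  qed
  have "M *\<^sub>v v0 = mu \<cdot>\<^sub>v v0"
  proof (rule eq_vecI)
    show "dim_vec (M *\<^sub>v v0) = dim_vec (mu \<cdot>\<^sub>v v0)" using Mc v0c by simp
    fix j assume "j < dim_vec (mu \<cdot>\<^sub>v v0)"
    then have j: "j < N" using v0c by simp
    have "M *\<^sub>v v0 = transpose_mat A *\<^sub>v (A *\<^sub>v v0)"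
      unfolding M_def using Ac v0c by (simp add: assoc_mult_mat_vec)
    then have "(M *\<^sub>v v0) $ j = (\<Sum>i<m. L (unitfun j) i * (A *\<^sub>v v0) $ i)"
      using j A Ac by (simp add: scalar_prod_def row_def lessThan_atLeast0)
    also have "\<dots> = (\<Sum>i<m. L y0 i * L (unitfun j) i)" using Av0 by (simp add: mult.commute)
    also have "\<dots> = mu * y0 (int j + 1)" using key[OF unitfun_inE[OF j]] sum_unitfun[OF j] by simp
    finally show "(M *\<^sub>v v0) $ j = (mu \<cdot>\<^sub>v v0) $ j" using j by (simp add: v0_def)
  qed
  moreover have "v0 \<noteq> 0\<^sub>v N"
  proof
    assume "v0 = 0\<^sub>v N"
    then have "y0 (int j + 1) = 0" if "j < N" for j
      using that by (metis index_vec index_zero_vec(1) v0_def)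
    then have "y0 k = 0" if "k \<in> {1..int N}" for k
    proof -
      define j where "j = nat (k - 1)"
      have "j < N" "int j + 1 = k" using that by (auto simp: j_def)
      then show ?thesis using \<open>\<And>j. j < N \<Longrightarrow> y0 (int j + 1) = 0\<close> by metis
    qed
    then have "nrm N y0 = 0" unfolding nrm_def by simp
    then show False using y01 by simp
  qed
  ultimately have ev: "eigenvalue M mu" unfolding eigenvalue_def eigenvector_def
    using Mc v0c by auto
  have fin: "finite {l. eigenvalue M l}"
  proof -
    have "char_poly M \<noteq> 0" using degree_monic_char_poly[OF Mc] by auto
    then have "finite {l. poly (char_poly M) l = 0}" by (rule poly_roots_finite)
    then show ?thesis using eigenvalue_root_char_poly[OF Mc] by simp
  qed
  have "smallest_eigenvalue M \<le> mu" unfolding smallest_eigenvalue_def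
    using fin ev by (intro Min_le) auto
  then have "smallest_eigenvalue M * nrm N y \<le> mu * nrm N y"
    by (intro mult_right_mono nrm_nonneg)
  also have "\<dots> \<le> Q y" using Qge[OF y] .
  finally show ?thesis unfolding Q_def M_def .
qed

lemma fdiff_eq: "fdiff y m = y (m + 1) - y m" by (simp add: fdiff_def)
lemma fdiff2_eq: "fdiff2 y m = y (m + 2) - 2 * y (m + 1) + y m"
  by (simp add: fdiff2_def fdiff_def algebra_simps)

lemma E_repr:
  assumes "inE N y"
  shows "y x = (\<Sum>j<N. y (int j + 1) * unitfun j x)"
proof (cases "x \<in> {1..int N}")
  case True
  define j0 where "j0 = nat (x - 1)"
  have j0: "j0 < N" "int j0 + 1 = x" using True by (auto simp: j0_def)
  have "(\<Sum>j<N. y (int j + 1) * unitfun j x) = (\<Sum>j<N. if j = j0 then y x else 0)"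
    by (rule sum.cong) (use j0 in \<open>auto simp: unitfun_def\<close>)
  also have "\<dots> = y x" using j0 by simp
  finally show ?thesis by simp
next
  case False
  then have "y x = 0" using assms by (auto simp: inE_def)
  moreover have "unitfun j x = 0" if "j < N" for j using False that by (auto simp: unitfun_def)
  ultimately show ?thesis by simp
qed

lemma lin_fdiff2:
  assumes "inE N y"
  shows "fdiff2 y m = (\<Sum>j<N. y (int j + 1) * fdiff2 (unitfun j) m)"
proof -
  have "(\<Sum>j<N. y (int j + 1) * fdiff2 (unitfun j) m)
      = (\<Sum>j<N. y (int j + 1) * unitfun j (m+2)) - 2 * (\<Sum>j<N. y (int j + 1) * unitfun j (m+1))
        + (\<Sum>j<N. y (int j + 1) * unitfun j m)"
    by (simp add: fdiff2_eq algebra_simps sum.distrib sum_subtractf sum_distrib_left)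
  also have "\<dots> = fdiff2 y m" by (simp only: E_repr[OF assms, symmetric] fdiff2_eq)
  finally show ?thesis by simp
qed

lemma lin_fdiff:
  assumes "inE N y"
  shows "fdiff y m = (\<Sum>j<N. y (int j + 1) * fdiff (unitfun j) m)"
proof -
  have "(\<Sum>j<N. y (int j + 1) * fdiff (unitfun j) m)
      = (\<Sum>j<N. y (int j + 1) * unitfun j (m+1)) - (\<Sum>j<N. y (int j + 1) * unitfun j m)"
    by (simp add: fdiff_eq algebra_simps sum.distrib sum_subtractf sum_distrib_left)
  also have "\<dots> = fdiff y m" by (simp only: E_repr[OF assms, symmetric] fdiff_eq)
  finally show ?thesis by simp
qed

lemma lambda2_bound:
  assumes "N \<ge> 1" "inE N y"
  shows "(\<Sum>i<N+2. (fdiff2 y (int i - 1))^2) \<ge> lambda2 N * nrm N y"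
  unfolding lambda2_def
  by (rule eig_bound[where L = "\<lambda>y i. fdiff2 y (int i - 1)"])
     (use assms lin_fdiff2 in \<open>auto simp: Wmat_def\<close>)

lemma lambda1_bound:
  assumes "N \<ge> 1" "inE N y"
  shows "(\<Sum>i<N+1. (fdiff y (int i))^2) \<ge> lambda1 N * nrm N y"
  unfolding lambda1_def
  by (rule eig_bound[where L = "\<lambda>y i. fdiff y (int i)"])
     (use assms lin_fdiff in \<open>auto simp: Vmat_def\<close>)

lemma sum_shift_int: "(\<Sum>i<m. g (int i + c)) = (\<Sum>k\<in>{c..<c + int m}. g k)"
proof (induction m)
  case (Suc m)
  have "{c..<c + int (Suc m)} = insert (c + int m) {c..<c + int m}" by auto
  then show ?case using Suc by (simp add: add.commute)
qed simp

lemma sumsq_shift: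
  assumes "inE N y" "c \<le> 1" "int m + c \<ge> int N + 1"
  shows "(\<Sum>i<m. (y (int i + c))^2) = nrm N y"
proof -
  have "(\<Sum>i<m. (y (int i + c))^2) = (\<Sum>k\<in>{c..<c + int m}. (y k)^2)"
    by (rule sum_shift_int)
  also have "\<dots> = nrm N y" unfolding nrm_def
    by (rule sum.mono_neutral_right) (use assms in \<open>auto simp: inE_def\<close>)
  finally show ?thesis .
qed

lemma ineq3: "((a::real) - 2 * b + c)^2 \<le> 4 * a^2 + 8 * b^2 + 4 * c^2"
proof -
  have "4 * a^2 + 8 * b^2 + 4 * c^2 - (a - 2 * b + c)^2 = 2 * (a + b)^2 + 2 * (b + c)^2 + (a - c)^2"
    by (simp add: power2_eq_square algebra_simps)
  moreover have "2 * (a + b)^2 + 2 * (b + c)^2 + (a - c)^2 \<ge> 0" by simp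
  ultimately show ?thesis by linarith
qed

lemma ineq2: "((a::real) - b)^2 \<le> 2 * a^2 + 2 * b^2"
proof -
  have "2 * a^2 + 2 * b^2 - (a - b)^2 = (a + b)^2"
    by (simp add: power2_eq_square algebra_simps)
  then show ?thesis by (metis diff_ge_0_iff_ge zero_le_power2)
qed

lemma Q2_upper:
  assumes "inE N y"
  shows "(\<Sum>i<N+2. (fdiff2 y (int i - 1))^2) \<le> 16 * nrm N y"
proof -
  have "(\<Sum>i<N+2. (fdiff2 y (int i - 1))^2) \<le>
     (\<Sum>i<N+2. 4 * (y (int i + 1))^2 + 8 * (y (int i + 0))^2 + 4 * (y (int i + (-1)))^2)"
  proof (rule sum_mono)
    fix i
    have e: "fdiff2 y (int i - 1) = y (int i + 1) - 2 * y (int i + 0) + y (int i + (-1))"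
      by (simp add: fdiff2_eq add.commute)
    show "(fdiff2 y (int i - 1))^2 \<le> 4 * (y (int i + 1))^2 + 8 * (y (int i + 0))^2 + 4 * (y (int i + (-1)))^2"
      unfolding e by (rule ineq3)
  qed
  also have "\<dots> = 4 * (\<Sum>i<N+2. (y (int i + 1))^2) + 8 * (\<Sum>i<N+2. (y (int i + 0))^2)
      + 4 * (\<Sum>i<N+2. (y (int i + (-1)))^2)"
    by (simp only: sum.distrib sum_distrib_left)
  also have "\<dots> = 16 * nrm N y"
    using sumsq_shift[OF assms, of 1 "N+2"] sumsq_shift[OF assms, of 0 "N+2"] sumsq_shift[OF assms, of "-1" "N+2"]
    by simp
  finally show ?thesis .
qed

lemma Q1_upper:
  assumes "inE N y"
  shows "(\<Sum>i<N+1. (fdiff y (int i))^2) \<le> 4 * nrm N y"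
proof -
  have "(\<Sum>i<N+1. (fdiff y (int i))^2) \<le>
     (\<Sum>i<N+1. 2 * (y (int i + 1))^2 + 2 * (y (int i + 0))^2)"
  proof (rule sum_mono)
    fix i
    have e: "fdiff y (int i) = y (int i + 1) - y (int i + 0)"
      by (simp add: fdiff_eq add.commute)
    show "(fdiff y (int i))^2 \<le> 2 * (y (int i + 1))^2 + 2 * (y (int i + 0))^2"
      unfolding e by (rule ineq2)
  qed
  also have "\<dots> = 2 * (\<Sum>i<N+1. (y (int i + 1))^2) + 2 * (\<Sum>i<N+1. (y (int i + 0))^2)"
    by (simp only: sum.distrib sum_distrib_left)
  also have "\<dots> = 4 * nrm N y"
    using sumsq_shift[OF assms, of 1 "N+1"] sumsq_shift[OF assms, of 0 "N+1"]
    by simp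
  finally show ?thesis .
qed

lemma antideriv:
  fixes g :: "real \<Rightarrow> real"
  assumes cg: "continuous_on UNIV g"
  shows "\<exists>G. G 0 = 0 \<and> (\<forall>x. (G has_real_derivative g x) (at x))"
proof -
  have intg: "g integrable_on {a..b}" for a b
    by (rule integrable_continuous_real) (rule continuous_on_subset[OF cg], simp)
  define G where "G x = integral {-(\<bar>x\<bar>+1)..x} g - integral {-(\<bar>x\<bar>+1)..0} g" for x
  have indep: "integral {-M1..x} g - integral {-M1..0} g = integral {-M2..x} g - integral {-M2..0} g"
    if "M1 \<ge> \<bar>x\<bar>" "M2 \<ge> M1" for M1 M2 x
  proof -
    have "integral {-M2..-M1} g + integral {-M1..x} g = integral {-M2..x} g"
      using Henstock_Kurzweil_Integration.integral_combine[of "-M2" "-M1" x g] that intg by auto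
    moreover have "integral {-M2..-M1} g + integral {-M1..0} g = integral {-M2..0} g"
      using Henstock_Kurzweil_Integration.integral_combine[of "-M2" "-M1" 0 g] that intg by auto
    ultimately show ?thesis by linarith
  qed
  have GM: "G x = integral {-M..x} g - integral {-M..0} g" if "M \<ge> \<bar>x\<bar>" for M x
  proof (cases "M \<le> \<bar>x\<bar> + 1")
    case True
    then show ?thesis unfolding G_def using indep[of x M "\<bar>x\<bar>+1"] that by simp
  next
    case False
    then show ?thesis unfolding G_def using indep[of x "\<bar>x\<bar>+1" M] that by simp
  qed
  have "G 0 = 0" unfolding G_def by simp
  moreover have "(G has_real_derivative g x) (at x)" for x
  proof -
    define M where "M = \<bar>x\<bar> + 1"
    have xin: "x \<in> {-M..M}" unfolding M_def by auto
    have "((\<lambda>z. integral {-M..z} g) has_real_derivative g x) (at x within {-M..M})"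
      by (rule integral_has_real_derivative[OF continuous_on_subset[OF cg] xin]) simp
    moreover have "x \<in> interior {-M..M}" unfolding M_def by auto
    then have "at x within {-M..M} = at x" by (rule at_within_interior)
    ultimately have "((\<lambda>z. integral {-M..z} g) has_real_derivative g x) (at x)"
      by (simp only:)
    then have d: "((\<lambda>z. integral {-M..z} g - integral {-M..0} g) has_real_derivative g x) (at x)"
      by (auto intro!: derivative_eq_intros)
    show ?thesis
    proof (rule has_field_derivative_transform_within_open[OF d, of "{-M<..<M}"])
      show "x \<in> {-M<..<M}" unfolding M_def by auto
      fix z assume "z \<in> {-M<..<M}"
      then have "M \<ge> \<bar>z\<bar>" by auto
      then show "integral {-M..z} g - integral {-M..0} g = G z" using GM by simp
    qed simp
  qed
  ultimately show ?thesis by blast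
qed

lemma F_lower:
  fixes F g :: "real \<Rightarrow> real"
  assumes D: "\<And>x. (F has_real_derivative g x) (at x)"
    and T: "\<And>s. s \<ge> T \<Longrightarrow> g s \<ge> a * s"
    and S: "\<And>s. s \<ge> S \<Longrightarrow> g (-s) \<le> - g s"
  shows "\<exists>C. \<forall>s. F s \<ge> a/2 * s^2 - C"
proof -
  define T' where "T' = max (max T S) 0"
  define phi where "phi x = F x - a/2 * x^2" for x
  have Dphi: "(phi has_real_derivative (g x - a * x)) (at x)" for x
    unfolding phi_def by (auto intro!: derivative_eq_intros D)
  define psi where "psi u = F (-u) - F u" for u
  have Dpsi: "(psi has_real_derivative (- g (-u) - g u)) (at u)" for u
  proof -
    have "((\<lambda>u. F (-u)) has_real_derivative (g (-u) * (-1))) (at u)"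
      by (rule DERIV_chain2[OF D]) (auto intro!: derivative_eq_intros)
    then show ?thesis unfolding psi_def by (auto intro!: derivative_eq_intros D)
  qed
  have c1: "phi s \<ge> phi T'" if "s \<ge> T'" for s
  proof (rule DERIV_nonneg_imp_nondecreasing[OF that])
    fix x assume "T' \<le> x" "x \<le> s"
    then have "g x - a * x \<ge> 0" using T[of x] by (auto simp: T'_def)
    then show "\<exists>y. DERIV phi x :> y \<and> y \<ge> 0" using Dphi by blast
  qed
  have c2: "psi s \<ge> psi T'" if "s \<ge> T'" for s
  proof (rule DERIV_nonneg_imp_nondecreasing[OF that])
    fix x assume "T' \<le> x" "x \<le> s"
    then have "- g (-x) - g x \<ge> 0" using S[of x] by (auto simp: T'_def)
    then show "\<exists>y. DERIV psi x :> y \<and> y \<ge> 0" using Dpsi by blast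
  qed
  have "continuous_on {-T'..T'} phi"
    using Dphi by (meson DERIV_atLeastAtMost_imp_continuous_on)
  moreover have "compact {-T'..T'}" by simp
  moreover have "{-T'..T'} \<noteq> {}" by (auto simp: T'_def)
  ultimately have "\<exists>x\<in>{-T'..T'}. \<forall>y\<in>{-T'..T'}. phi x \<le> phi y"
    by (intro continuous_attains_inf)
  then obtain m where m: "\<And>y. y \<in> {-T'..T'} \<Longrightarrow> phi m \<le> phi y" by blast
  define C where "C = max (- phi m) (max (- phi T') (- phi T' - psi T'))"
  have "F s \<ge> a/2 * s^2 - C" for s
  proof -
    consider "s \<in> {-T'..T'}" | "s > T'" | "s < -T'" by force
    then show ?thesis
    proof cases
      case 1
      then show ?thesis using m[OF 1] unfolding phi_def C_def by auto
    next
      case 2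
      then show ?thesis using c1[of s] unfolding phi_def C_def by auto
    next
      case 3
      then have "-s \<ge> T'" by simp
      from c1[OF this] c2[OF this] have "F s \<ge> a/2 * (-s)^2 + phi T' + psi T'"
        unfolding phi_def psi_def by simp
      then show ?thesis unfolding C_def by simp
    qed
  qed
  then show ?thesis by blast
qed

lemma F_upper0:
  fixes F g :: "real \<Rightarrow> real"
  assumes D: "\<And>x. (F has_real_derivative g x) (at x)"
    and F0: "F 0 = 0" and g0: "g 0 = 0"
    and lt: "\<And>s. s \<noteq> 0 \<Longrightarrow> \<bar>s\<bar> < d \<Longrightarrow> g s / s < b"
    and s: "\<bar>s\<bar> < d"
  shows "F s \<le> b/2 * s^2"
proof -
  define phi where "phi x = F x - b/2 * x^2" for x
  have Dphi: "(phi has_real_derivative (g x - b * x)) (at x)" for x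
    unfolding phi_def by (auto intro!: derivative_eq_intros D)
  have "phi s \<le> phi 0"
  proof (cases "s \<ge> 0")
    case True
    show ?thesis
    proof (rule DERIV_nonpos_imp_nonincreasing[OF True])
      fix x assume x: "0 \<le> x" "x \<le> s"
      have "g x - b * x \<le> 0"
      proof (cases "x = 0")
        case True then show ?thesis using g0 by simp
      next
        case False
        then have "x > 0" using x by simp
        moreover have "g x / x < b" using lt[of x] False x s by simp
        ultimately show ?thesis by (simp add: divide_less_eq)
      qed
      then show "\<exists>y. DERIV phi x :> y \<and> y \<le> 0" using Dphi by blast
    qed
  next
    case False
    then have "s \<le> 0" by simp
    show ?thesis
    proof (rule DERIV_nonneg_imp_nondecreasing[OF \<open>s \<le> 0\<close>])
      fix x assume x: "s \<le> x" "x \<le> 0"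
      have "g x - b * x \<ge> 0"
      proof (cases "x = 0")
        case True then show ?thesis using g0 by simp
      next
        case False
        then have "x < 0" using x by simp
        moreover have "g x / x < b" using lt[of x] False x s by simp
        ultimately show ?thesis by (simp add: neg_divide_less_eq)
      qed
      then show "\<exists>y. DERIV phi x :> y \<and> y \<ge> 0" using Dphi by blast
    qed
  qed
  then show ?thesis unfolding phi_def using F0 by simp
qed

lemma sum_delta_mult: "j < (n::nat) \<Longrightarrow> (\<Sum>i<n. g i * (if i = j then 1 else 0)) = (g j :: real)"
proof -
  assume "j < n"
  have "(\<Sum>i<n. g i * (if i = j then 1 else 0)) = (\<Sum>i<n. if i = j then g i else 0)"
    by (rule sum.cong) auto
  also have "\<dots> = (if j \<in> {..<n} then g j else 0)" by (rule sum.delta) simp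
  finally show ?thesis using \<open>j < n\<close> by simp
qed

lemma D2_delta:
  assumes "j0 < N"
  shows "(\<Sum>i<N+2. g i * fdiff2 (unitfun j0) (int i - 1)) = g j0 - 2 * g (j0+1) + g (j0+2)"
proof -
  have e: "fdiff2 (unitfun j0) (int i - 1) =
      (if i = j0 then 1 else 0) - 2 * (if i = j0 + 1 then 1 else 0) + (if i = j0 + 2 then 1 else 0)" for i
    by (auto simp: fdiff2_eq unitfun_def)
  have "(\<Sum>i<N+2. g i * fdiff2 (unitfun j0) (int i - 1))
     = (\<Sum>i<N+2. g i * (if i = j0 then 1 else 0) - 2 * (g i * (if i = j0 + 1 then 1 else 0))
       + g i * (if i = j0 + 2 then 1 else 0))"
    by (rule sum.cong) (simp_all only: e algebra_simps)
  also have "\<dots> = (\<Sum>i<N+2. g i * (if i = j0 then 1 else 0)) - 2 * (\<Sum>i<N+2. g i * (if i = j0 + 1 then 1 else 0))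
       + (\<Sum>i<N+2. g i * (if i = j0 + 2 then 1 else 0))"
    by (simp only: sum.distrib sum_subtractf sum_distrib_left)
  also have "\<dots> = g j0 - 2 * g (j0+1) + g (j0+2)" using assms
    by (simp only: sum_delta_mult add_less_mono1 trans_less_add1)
  finally show ?thesis .
qed

lemma D1_delta:
  assumes "j0 < N"
  shows "(\<Sum>i<N+1. g i * fdiff (unitfun j0) (int i)) = g j0 - g (j0+1)"
proof -
  have e: "fdiff (unitfun j0) (int i) = (if i = j0 then 1 else 0) - (if i = j0 + 1 then 1 else 0)" for i
    by (auto simp: fdiff_eq unitfun_def)
  have "(\<Sum>i<N+1. g i * fdiff (unitfun j0) (int i))
     = (\<Sum>i<N+1. g i * (if i = j0 then 1 else 0) - g i * (if i = j0 + 1 then 1 else 0))"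
    by (rule sum.cong) (simp_all only: e algebra_simps)
  also have "\<dots> = (\<Sum>i<N+1. g i * (if i = j0 then 1 else 0)) - (\<Sum>i<N+1. g i * (if i = j0 + 1 then 1 else 0))"
    by (simp only: sum_subtractf)
  also have "\<dots> = g j0 - g (j0+1)" using assms by (simp add: sum_delta_mult)
  finally show ?thesis .
qed

lemma fdiff2_lin: "fdiff2 (\<lambda>k. y k + t * u k) m = fdiff2 y m + t * fdiff2 u m"
  by (simp add: fdiff2_eq algebra_simps)
lemma fdiff_lin: "fdiff (\<lambda>k. y k + t * u k) m = fdiff y m + t * fdiff u m"
  by (simp add: fdiff_eq algebra_simps)

lemma deriv_sq: "((\<lambda>t. (A + t * B)^2) has_real_derivative (2 * A * B)) (at 0)"
  by (auto intro!: derivative_eq_intros)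

lemma lin_aux: "(x1::real) \<le> x2 \<Longrightarrow> (x3::real) \<le> x4 \<Longrightarrow> (x5::real) - x6 \<le> x7 \<Longrightarrow> (x1 - x4)/2 + x5 - x6 \<le> x2/2 - x3/2 + x7"
  by (simp add: field_simps)
lemma lin_aux2: "(x1::real) \<le> x2 \<Longrightarrow> (x3::real) \<le> x4 \<Longrightarrow> (x5::real) \<le> x6 \<Longrightarrow> x1/2 - x4/2 + x5 \<le> (x2 - x3)/2 + x6"
  by (simp add: field_simps)

theorem theorem5:
  fixes N :: nat and f :: "int \<Rightarrow> real \<Rightarrow> real" and p q :: "int \<Rightarrow> real"
    and Linf :: "int \<Rightarrow> ereal" and L0 :: "int \<Rightarrow> real"
  assumes "N \<ge> 1"
    and dimE: "N > 1"
    and cont: "\<forall>k\<in>{1 .. int N}. continuous_on UNIV (f k)"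
    and ppos: "pmax N p > 0"
    and lim_inf: "\<forall>k\<in>{1 .. int N}. ((\<lambda>s. ereal (f k s / s)) \<longlongrightarrow> Linf k) at_top"
    and lim_zero: "\<forall>k\<in>{1 .. int N}. ((\<lambda>s. f k s / s) \<longlongrightarrow> L0 k) (at 0)"
    and H1: "Min (Linf ` {1 .. int N}) > ereal (alpha1 N p q)"
    and H2: "\<exists>S>0. \<forall>s\<ge>S. \<forall>k\<in>{1 .. int N}. f k (- s) \<le> - f k s"
    and H3: "Max (L0 ` {1 .. int N}) < alpha2 N p q"
  shows "\<exists>y1 y2. is_solution N p q f y1 \<and> is_solution N p q f y2 \<and>
           (\<exists>k\<in>{-1 .. int N + 2}. y1 k \<noteq> y2 k)"
proof -
  have N1: "N \<ge> 1" using assms(1) .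
  define K where "K = {1 .. int N}"
  have finK: "finite K" unfolding K_def by simp
  have "\<forall>k\<in>K. \<exists>G. G 0 = 0 \<and> (\<forall>x. (G has_real_derivative f k x) (at x))"
    using cont antideriv unfolding K_def by blast
  then have "\<exists>F. \<forall>k\<in>K. F k 0 = 0 \<and> (\<forall>x. (F k has_real_derivative f k x) (at x))"
    by (rule bchoice)
  then obtain F where F0: "\<And>k. k \<in> K \<Longrightarrow> F k 0 = 0"
    and DF: "\<And>k x. k \<in> K \<Longrightarrow> (F k has_real_derivative f k x) (at x)" by blast
  have contF: "continuous_on UNIV (F k)" if "k \<in> K" for k
    by (rule DERIV_continuous_on) (use DF[OF that] in simp)
  have cFk: "continuous_on S (\<lambda>y::int\<Rightarrow>real. F k (y k))" if "k \<in> K" for k S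
    by (rule continuous_on_compose2[OF contF[OF that] cont_coord]) auto
  have f0: "f k 0 = 0" if k: "k \<in> K" for k
  proof -
    have lz: "((\<lambda>s. f k s / s) \<longlongrightarrow> L0 k) (at 0)" using lim_zero k unfolding K_def by blast
    have "((\<lambda>s. s * (f k s / s)) \<longlongrightarrow> 0 * L0 k) (at 0)"
      by (rule tendsto_mult[OF tendsto_ident_at lz])
    moreover have "eventually (\<lambda>s. s * (f k s / s) = f k s) (at 0)"
      by (auto simp: eventually_at_filter)
    ultimately have l1: "(f k \<longlongrightarrow> 0) (at 0)" using tendsto_cong by force
    have "isCont (f k) 0" using cont k unfolding K_def
      by (meson continuous_on_eq_continuous_at open_UNIV UNIV_I)
    then have l2: "(f k \<longlongrightarrow> f k 0) (at 0)" by (simp add: isCont_def)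
    show ?thesis using tendsto_unique[OF at_neq_bot l2 l1] .
  qed
  obtain a where a1: "ereal (alpha1 N p q) < ereal a" and a2: "ereal a < Min (Linf ` K)"
    using ereal_dense2[OF H1] unfolding K_def by blast
  have a_gt: "a > alpha1 N p q" using a1 by simp
  obtain S where S: "S > 0" "\<forall>s\<ge>S. \<forall>k\<in>K. f k (- s) \<le> - f k s" using H2 unfolding K_def by blast
  have "\<forall>k\<in>K. \<exists>C. \<forall>s. F k s \<ge> a/2 * s^2 - C"
  proof
    fix k assume k: "k \<in> K"
    have "Min (Linf ` K) \<le> Linf k" using k finK by (intro Min_le) auto
    then have "ereal a < Linf k" using a2 by simp
    moreover have "((\<lambda>s. ereal (f k s / s)) \<longlongrightarrow> Linf k) at_top" using lim_inf k unfolding K_def by blast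
    ultimately have "eventually (\<lambda>s. ereal a < ereal (f k s / s)) at_top"
      using order_tendstoD(1) by blast
    then obtain T0 where T0: "\<And>s. s \<ge> T0 \<Longrightarrow> ereal a < ereal (f k s / s)"
      by (auto simp: eventually_at_top_linorder)
    have T: "a * s \<le> f k s" if "s \<ge> max T0 1" for s
    proof -
      have "a < f k s / s" using T0[of s] that by simp
      moreover have "s > 0" using that by simp
      ultimately show ?thesis by (simp add: less_divide_eq)
    qed
    show "\<exists>C. \<forall>s. F k s \<ge> a/2 * s^2 - C"
    proof -
      have Sk: "f k (-s) \<le> - f k s" if "S \<le> s" for s using S k that by auto
      show ?thesis by (rule F_lower[of "F k" "f k" "max T0 1" a S, OF DF[OF k] T Sk]) auto
    qed
  qed
  then have "\<exists>C. \<forall>k\<in>K. \<forall>s. F k s \<ge> a/2 * s^2 - C k" by (rule bchoice)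
  then obtain C where C: "\<And>k s. k \<in> K \<Longrightarrow> F k s \<ge> a/2 * s^2 - C k" by blast
  define Ct where "Ct = (\<Sum>k\<in>K. C k)"
  obtain b where b1: "Max (L0 ` K) < b" and b2: "b < alpha2 N p q"
    using H3 dense unfolding K_def by blast
  have k1: "1 \<in> K" using N1 unfolding K_def by simp
  have "L0 1 \<le> Max (L0 ` K)" using k1 finK by (intro Max_ge) auto
  then have "L0 1 < b" using b1 by simp
  moreover have "((\<lambda>s. f 1 s / s) \<longlongrightarrow> L0 1) (at 0)" using lim_zero k1 unfolding K_def by blast
  ultimately have "eventually (\<lambda>s. f 1 s / s < b) (at 0)" using order_tendstoD(2) by blast
  then obtain d where d: "d > 0" "\<And>s. s \<noteq> 0 \<Longrightarrow> dist s 0 < d \<Longrightarrow> f 1 s / s < b"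
    by (auto simp: eventually_at)
  have Fup: "F 1 s \<le> b/2 * s^2" if "\<bar>s\<bar> < d" for s
    by (rule F_upper0[OF DF[OF k1] F0[OF k1] f0[OF k1]]) (use d that in auto)

  define PP where "PP y = (\<Sum>i<N+2. p (int i + 1) * (fdiff2 y (int i - 1))^2)" for y
  define QQ where "QQ y = (\<Sum>i<N+1. q (int i + 1) * (fdiff y (int i))^2)" for y
  define J where "J y = PP y / 2 - QQ y / 2 + (\<Sum>k\<in>K. F k (y k))" for y
  define Q2 where "Q2 y = (\<Sum>i<N+2. (fdiff2 y (int i - 1))^2)" for y
  define Q1 where "Q1 y = (\<Sum>i<N+1. (fdiff y (int i))^2)" for y

  have pmin_le: "pmin N p \<le> p (int i + 1)" if "i < N+2" for i
    unfolding pmin_def by (rule Min_le) (use that in auto)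
  have pmax_ge: "pmax N p \<ge> p (int i + 1)" if "i < N+2" for i
    unfolding pmax_def by (rule Max_ge) (use that in auto)
  have qmin_le: "qmin N q \<le> q (int i + 1)" if "i < N+1" for i
    unfolding qmin_def by (rule Min_le) (use that in auto)
  have qmax_ge: "qmax N q \<ge> q (int i + 1)" if "i < N+1" for i
    unfolding qmax_def by (rule Max_ge) (use that in auto)
  have PP_lower: "PP y \<ge> pmin N p * Q2 y" for y
    unfolding PP_def Q2_def sum_distrib_left
    by (rule sum_mono) (intro mult_right_mono pmin_le, auto)
  have PP_upper: "PP y \<le> pmax N p * Q2 y" for y
    unfolding PP_def Q2_def sum_distrib_left
    by (rule sum_mono) (intro mult_right_mono pmax_ge, auto)
  have QQ_lower: "QQ y \<ge> qmin N q * Q1 y" for y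
    unfolding QQ_def Q1_def sum_distrib_left
    by (rule sum_mono) (intro mult_right_mono qmin_le, auto)
  have QQ_upper: "QQ y \<le> qmax N q * Q1 y" for y
    unfolding QQ_def Q1_def sum_distrib_left
    by (rule sum_mono) (intro mult_right_mono qmax_ge, auto)

  have lowJ: "J y \<ge> (a - alpha1 N p q)/2 * nrm N y - Ct" if y: "inE N y" for y
  proof -
    have l2: "Q2 y \<ge> lambda2 N * nrm N y" unfolding Q2_def by (rule lambda2_bound[OF N1 y])
    have u2: "Q2 y \<le> 16 * nrm N y" unfolding Q2_def by (rule Q2_upper[OF y])
    have l1: "Q1 y \<ge> lambda1 N * nrm N y" unfolding Q1_def by (rule lambda1_bound[OF N1 y])
    have u1: "Q1 y \<le> 4 * nrm N y" unfolding Q1_def by (rule Q1_upper[OF y])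
    have P: "PP y \<ge> eta' N p * pmin N p * nrm N y"
    proof (cases "pmin N p \<ge> 0")
      case True
      have h: "pmin N p * (lambda2 N * nrm N y) \<le> pmin N p * Q2 y" by (rule mult_left_mono[OF l2 True])
      have eq: "eta' N p * pmin N p * nrm N y = pmin N p * (lambda2 N * nrm N y)" using True by (simp add: eta'_def)
      show ?thesis using h eq PP_lower[of y] by linarith
    next
      case False
      have h: "pmin N p * (16 * nrm N y) \<le> pmin N p * Q2 y" by (rule mult_left_mono_neg[OF u2]) (use False in simp)
      have eq: "eta' N p * pmin N p * nrm N y = pmin N p * (16 * nrm N y)" using False by (simp add: eta'_def)
      show ?thesis using h eq PP_lower[of y] by linarith
    qed
    have Qb: "QQ y \<le> eta N q * qmax N q * nrm N y"
    proof (cases "qmax N q < 0")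
      case True
      have h: "qmax N q * Q1 y \<le> qmax N q * (lambda1 N * nrm N y)" by (rule mult_left_mono_neg[OF l1]) (use True in simp)
      have eq: "eta N q * qmax N q * nrm N y = qmax N q * (lambda1 N * nrm N y)" using True by (simp add: eta_def)
      show ?thesis using h eq QQ_upper[of y] by linarith
    next
      case False
      have h: "qmax N q * Q1 y \<le> qmax N q * (4 * nrm N y)" by (rule mult_left_mono[OF u1]) (use False in simp)
      have eq: "eta N q * qmax N q * nrm N y = qmax N q * (4 * nrm N y)" using False by (simp add: eta_def)
      show ?thesis using h eq QQ_upper[of y] by linarith
    qed
    have "(\<Sum>k\<in>K. F k (y k)) \<ge> (\<Sum>k\<in>K. a/2 * (y k)^2 - C k)"
      by (rule sum_mono) (rule C)
    also have "(\<Sum>k\<in>K. a/2 * (y k)^2 - C k) = a/2 * nrm N y - Ct"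
      unfolding Ct_def nrm_def K_def by (simp add: sum_subtractf sum_distrib_left)
    finally have Fs: "(\<Sum>k\<in>K. F k (y k)) \<ge> a/2 * nrm N y - Ct" .
    have e: "(a - alpha1 N p q)/2 * nrm N y = (eta' N p * pmin N p * nrm N y - eta N q * qmax N q * nrm N y)/2 + a/2 * nrm N y"
      by (simp add: alpha1_def field_simps)
    show ?thesis unfolding J_def e by (rule lin_aux[OF P Qb Fs])
  qed

  define e where "e = (\<lambda>k. d/2 * unitfun 0 k)"
  have eE: "inE N e" unfolding e_def using unitfun_inE[of 0 N] N1 by (auto simp: inE_def)
  have "nrm N e = (d/2)^2 * nrm N (unitfun 0)" unfolding e_def by (rule nrm_scale)
  then have ne: "nrm N e = (d/2)^2" using nrm_unitfun[of 0 N] N1 by simp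
  have Je: "J e < 0"
  proof -
    have l1: "Q1 e \<ge> lambda1 N * nrm N e" unfolding Q1_def by (rule lambda1_bound[OF N1 eE])
    have u2: "Q2 e \<le> 16 * nrm N e" unfolding Q2_def by (rule Q2_upper[OF eE])
    have u1: "Q1 e \<le> 4 * nrm N e" unfolding Q1_def by (rule Q1_upper[OF eE])
    have P: "PP e \<le> 16 * pmax N p * nrm N e"
    proof -
      have h: "pmax N p * Q2 e \<le> pmax N p * (16 * nrm N e)" by (rule mult_left_mono[OF u2]) (use ppos in simp)
      have eq: "16 * pmax N p * nrm N e = pmax N p * (16 * nrm N e)" by simp
      show ?thesis using h eq PP_upper[of e] by linarith
    qed
    have Qb: "QQ e \<ge> xi N q * qmin N q * nrm N e"
    proof (cases "qmin N q \<ge> 0")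
      case True
      have h: "qmin N q * (lambda1 N * nrm N e) \<le> qmin N q * Q1 e" by (rule mult_left_mono[OF l1 True])
      have eq: "xi N q * qmin N q * nrm N e = qmin N q * (lambda1 N * nrm N e)" using True by (simp add: xi_def)
      show ?thesis using h eq QQ_lower[of e] by linarith
    next
      case False
      have h: "qmin N q * (4 * nrm N e) \<le> qmin N q * Q1 e" by (rule mult_left_mono_neg[OF u1]) (use False in simp)
      have eq: "xi N q * qmin N q * nrm N e = qmin N q * (4 * nrm N e)" using False by (simp add: xi_def)
      show ?thesis using h eq QQ_lower[of e] by linarith
    qed
    have "(\<Sum>k\<in>K. F k (e k)) = (\<Sum>k\<in>K. if k = 1 then F 1 (d/2) else 0)"
      by (rule sum.cong) (auto simp: e_def unitfun_def F0)
    also have "\<dots> = F 1 (d/2)" using k1 finK by simp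
    also have "\<dots> \<le> b/2 * (d/2)^2" by (rule Fup) (use d in simp)
    finally have Fs: "(\<Sum>k\<in>K. F k (e k)) \<le> b/2 * nrm N e" using ne by simp
    have "J e \<le> (16 * pmax N p * nrm N e - xi N q * qmin N q * nrm N e)/2 + b/2 * nrm N e"
      unfolding J_def by (rule lin_aux2[OF P Qb Fs])
    also have "\<dots> = (b - alpha2 N p q)/2 * nrm N e" by (simp add: alpha2_def field_simps)
    also have "\<dots> < 0" using b2 ne d by (intro mult_neg_pos) auto
    finally show ?thesis .
  qed
  have J0: "J (\<lambda>_. 0) = 0" unfolding J_def PP_def QQ_def using F0 by (simp add: fdiff2_eq fdiff_eq)

  define w where "w = (a - alpha1 N p q) / 2"
  have wpos: "w > 0" unfolding w_def using a_gt by simp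
  have lowJ': "J y \<ge> w * nrm N y - Ct" if "inE N y" for y using lowJ[OF that] unfolding w_def .
  define R where "R = \<bar>Ct\<bar> / w + 1"
  have R1: "R \<ge> 1" unfolding R_def using wpos by simp
  define Kb where "Kb = {y::int\<Rightarrow>real. inE N y \<and> (\<forall>k. \<bar>y k\<bar> \<le> R)}"
  have "compact Kb" unfolding Kb_def by (rule compact_box) (use R1 in simp)
  moreover have "(\<lambda>_. 0) \<in> Kb" unfolding Kb_def using R1 by (auto simp: inE_def)
  then have "Kb \<noteq> {}" by auto
  moreover have "continuous_on Kb J"
    unfolding J_def PP_def QQ_def fdiff2_eq fdiff_eq
    by (auto intro!: continuous_intros cFk)
  ultimately have "\<exists>x\<in>Kb. \<forall>y\<in>Kb. J x \<le> J y" by (rule continuous_attains_inf)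
  then obtain ys where ysK: "ys \<in> Kb" and ysmin: "\<And>y. y \<in> Kb \<Longrightarrow> J ys \<le> J y" by blast
  have ysE: "inE N ys" using ysK unfolding Kb_def by simp
  have glob: "J ys \<le> J y" if y: "inE N y" for y
  proof (cases "y \<in> Kb")
    case True then show ?thesis using ysmin by blast
  next
    case False
    then have "\<not> (\<forall>k. \<bar>y k\<bar> \<le> R)" using y unfolding Kb_def by blast
    then obtain k where "\<not> \<bar>y k\<bar> \<le> R" by blast
    then have k: "\<bar>y k\<bar> > R" by simp
    then have "k \<in> {1..int N}" using y R1 unfolding inE_def by force
    then have "(y k)^2 \<le> nrm N y" unfolding nrm_def by (intro member_le_sum) auto
    moreover have "R^2 < (y k)^2" using k R1
      by (metis abs_ge_zero abs_le_square_iff abs_of_nonneg dual_order.trans linorder_not_le zero_le_one)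
    moreover have "R \<le> R^2" using R1 by (simp add: power2_eq_square)
    ultimately have nR: "nrm N y \<ge> R" by linarith
    have "w * R \<le> w * nrm N y"
      by (rule mult_left_mono[OF nR]) (use wpos in simp)
    moreover have "w * R = \<bar>Ct\<bar> + w"
      unfolding R_def using wpos by (simp add: field_simps)
    ultimately have "J y > 0" using lowJ'[OF y] wpos abs_ge_self[of Ct] by linarith
    moreover have "J ys \<le> 0" using ysmin[OF \<open>(\<lambda>_. 0) \<in> Kb\<close>] J0 by simp
    ultimately show ?thesis by simp
  qed
  have "J ys < 0" using glob[OF eE] Je by simp
  then have "ys \<noteq> (\<lambda>_. 0)" using J0 by auto
  then obtain k0 where k0: "ys k0 \<noteq> 0" by auto
  then have k0K: "k0 \<in> {-1 .. int N + 2}" using ysE unfolding inE_def by force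

  have crit: "fdiff2 (\<lambda>j. p j * fdiff2 ys (j - 2)) j + fdiff (\<lambda>j. q j * fdiff ys (j - 1)) j
        + f j (ys j) = 0" if j: "j \<in> {1..int N}" for j
  proof -
    define j0 where "j0 = nat (j - 1)"
    have j0: "j0 < N" "int j0 + 1 = j" using j by (auto simp: j0_def)
    define u where "u = unitfun j0"
    have uE: "inE N u" unfolding u_def by (rule unitfun_inE[OF j0(1)])
    define A where "A i = fdiff2 ys (int i - 1)" for i
    define B where "B i = fdiff2 u (int i - 1)" for i
    define Cc where "Cc i = fdiff ys (int i)" for i
    define D where "D i = fdiff u (int i)" for i
    define phi where "phi t = (\<Sum>i<N+2. p (int i + 1) * (A i + t * B i)^2) / 2
        - (\<Sum>i<N+1. q (int i + 1) * (Cc i + t * D i)^2) / 2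
        + (\<Sum>k\<in>K. F k (ys k + t * u k))" for t
    have phiJ: "phi t = J (\<lambda>k. ys k + t * u k)" for t
      unfolding phi_def J_def PP_def QQ_def A_def B_def Cc_def D_def fdiff2_lin fdiff_lin by simp
    have phimin: "phi 0 \<le> phi t" for t
    proof -
      have "inE N (\<lambda>k. ys k + t * u k)" using inE_lin[OF ysE uE, of 1 t] by simp
      then show ?thesis unfolding phiJ using glob by simp
    qed
    have dP: "((\<lambda>t. \<Sum>i<N+2. p (int i + 1) * (A i + t * B i)^2) has_real_derivative
        (\<Sum>i<N+2. p (int i + 1) * (2 * A i * B i))) (at 0)"
      by (intro DERIV_sum DERIV_cmult deriv_sq)
    have dQ: "((\<lambda>t. \<Sum>i<N+1. q (int i + 1) * (Cc i + t * D i)^2) has_real_derivative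
        (\<Sum>i<N+1. q (int i + 1) * (2 * Cc i * D i))) (at 0)"
      by (intro DERIV_sum DERIV_cmult deriv_sq)
    have dF: "((\<lambda>t. \<Sum>k\<in>K. F k (ys k + t * u k)) has_real_derivative
        (\<Sum>k\<in>K. f k (ys k + 0 * u k) * u k)) (at 0)"
    proof (rule DERIV_sum)
      fix k assume k: "k \<in> K"
      have "((\<lambda>t. ys k + t * u k) has_real_derivative u k) (at 0)"
        by (auto intro!: derivative_eq_intros)
      then show "((\<lambda>t. F k (ys k + t * u k)) has_real_derivative f k (ys k + 0 * u k) * u k) (at 0)"
        by (rule DERIV_chain2[OF DF[OF k]])
    qed
    have dphi: "(phi has_real_derivative
        ((\<Sum>i<N+2. p (int i + 1) * (2 * A i * B i)) / 2 - (\<Sum>i<N+1. q (int i + 1) * (2 * Cc i * D i)) / 2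
          + (\<Sum>k\<in>K. f k (ys k + 0 * u k) * u k))) (at 0)"
      unfolding phi_def by (intro DERIV_add DERIV_diff DERIV_cdivide dP dQ dF)
    have G0: "(\<Sum>i<N+2. p (int i + 1) * (2 * A i * B i)) / 2 - (\<Sum>i<N+1. q (int i + 1) * (2 * Cc i * D i)) / 2
          + (\<Sum>k\<in>K. f k (ys k + 0 * u k) * u k) = 0"
      by (rule DERIV_local_min[OF dphi, of 1]) (use phimin in auto)
    have s1: "(\<Sum>i<N+2. p (int i + 1) * (2 * A i * B i)) / 2 = (\<Sum>i<N+2. (p (int i + 1) * A i) * fdiff2 u (int i - 1))"
      unfolding B_def by (simp add: sum_divide_distrib sum_distrib_left algebra_simps)
    have s2: "(\<Sum>i<N+1. q (int i + 1) * (2 * Cc i * D i)) / 2 = (\<Sum>i<N+1. (q (int i + 1) * Cc i) * fdiff u (int i))"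
      unfolding D_def by (simp add: sum_divide_distrib sum_distrib_left algebra_simps)
    have s3: "(\<Sum>k\<in>K. f k (ys k) * unitfun j0 k) = f j (ys j)"
      using sum_unitfun[OF j0(1), of "\<lambda>k. f k (ys k)"] j0 unfolding K_def by simp
    have G: "(p (int j0 + 1) * A j0 - 2 * (p (int (j0+1) + 1) * A (j0+1)) + p (int (j0+2) + 1) * A (j0+2))
        - (q (int j0 + 1) * Cc j0 - q (int (j0+1) + 1) * Cc (j0+1)) + f j (ys j) = 0"
      using G0 unfolding s1 s2 u_def D2_delta[OF j0(1)] D1_delta[OF j0(1)] by (simp add: s3)
    show ?thesis using G unfolding A_def Cc_def j0(2)[symmetric]
      by (simp add: fdiff2_eq fdiff_eq algebra_simps)
  qed
  have sol_ys: "is_solution N p q f ys"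
    unfolding is_solution_def using crit ysE unfolding inE_def by auto
  have sol_0: "is_solution N p q f (\<lambda>_. 0)"
    unfolding is_solution_def using f0 unfolding K_def by (simp add: fdiff2_eq fdiff_eq)
  show ?thesis using sol_ys sol_0 k0 k0K by blast
qed

end
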